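(* Let $n\ge 2$ and let $k$ be an odd integer with $1\le k\le n$. Then $$c(n,n-k)=a(n,k)+a(n,k-1).$$
   Context: $c(n,j)$ is the unsigned Stirling number of the first kind (number of permutations of $\{1,\dots,n\}$ with exactly $j$ cycles; $c(n,j)=0$ for $j\le 0$ when $n\ge 1$). $A_n$ is the alternating group on $\{1,\dots,n\}$, $T(A_n)=\{(1\,2)(i\,j)\mid 1\le i<j\le n\}$, $\ell_{T(A_n)}(v)=\min\{r\ge 0\mid v=t_1\cdots t_r,\ t_i\in T(A_n)\}$, and $a(n,m)$ is the number of $v\in A_n$ with $\ell_{T(A_n)}(v)=m$. *)

theory Defs
  imports "HOL-Combinatorics.Combinatorics"
begin

definition alt_group :: "nat \<Rightarrow> (nat \<Rightarrow> nat) set" where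
  "alt_group n = {v. v permutes {1..n} \<and> evenperm v}"

definition gens_T :: "nat \<Rightarrow> (nat \<Rightarrow> nat) set" where
  "gens_T n = {transpose 1 2 \<circ> transpose i j | i j. 1 \<le> i \<and> i < j \<and> j \<le> n}"

definition lenT :: "nat \<Rightarrow> (nat \<Rightarrow> nat) \<Rightarrow> nat" where
  "lenT n v = (LEAST r. \<exists>ts. length ts = r \<and> set ts \<subseteq> gens_T n \<and> v = foldr (\<circ>) ts id)"

definition a_count :: "nat \<Rightarrow> nat \<Rightarrow> nat" where
  "a_count n m = card {v \<in> alt_group n. lenT n v = m}"

end

theory Submission
  imports Defs
begin

lemma conj_transpose:
  "transpose x y \<circ> transpose a b \<circ> transpose x y = transpose (transpose x y a) (transpose x y b)"
  by (auto simp: fun_eq_iff transpose_def)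

definition Tr :: "nat \<Rightarrow> (nat \<Rightarrow> nat) set" where
  "Tr n = {transpose a b | a b. a \<in> {1..n} \<and> b \<in> {1..n} \<and> a \<noteq> b}"

definition isprod :: "nat \<Rightarrow> nat \<Rightarrow> (nat \<Rightarrow> nat) \<Rightarrow> bool" where
  "isprod n r w = (\<exists>ts. length ts = r \<and> set ts \<subseteq> Tr n \<and> w = foldr (\<circ>) ts id)"

definition L :: "nat \<Rightarrow> (nat \<Rightarrow> nat) \<Rightarrow> nat" where
  "L n w = (LEAST r. isprod n r w)"

lemma L_le: "isprod n r w \<Longrightarrow> L n w \<le> r"
  unfolding L_def by (rule Least_le)

lemma L_prod: "isprod n r w \<Longrightarrow> isprod n (L n w) w"
  unfolding L_def by (rule LeastI)

lemma isprod_cons: "isprod n r w \<Longrightarrow> \<tau> \<in> Tr n \<Longrightarrow> isprod n (Suc r) (\<tau> \<circ> w)"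
  unfolding isprod_def by (metis (no_types, lifting) foldr_Cons insert_subset length_Cons list.set(2) o_apply)

lemma isprod_mono: "isprod n r w \<Longrightarrow> isprod (Suc n) r w"
proof -
  have "Tr n \<subseteq> Tr (Suc n)" unfolding Tr_def by fastforce
  then show "isprod n r w \<Longrightarrow> isprod (Suc n) r w" unfolding isprod_def by blast
qed

lemma Tr_perm: "\<tau> \<in> Tr n \<Longrightarrow> \<tau> permutes {1..n}"
  unfolding Tr_def by (auto intro: permutes_swap_id)

lemma Tr_odd: "\<tau> \<in> Tr n \<Longrightarrow> \<not> evenperm \<tau>"
  unfolding Tr_def by (auto simp: evenperm_swap)

lemma Tr_permutation: "\<tau> \<in> Tr n \<Longrightarrow> permutation \<tau>"
  unfolding Tr_def by (auto simp: permutation_swap_id)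

lemma prod_props: "set ts \<subseteq> Tr n \<Longrightarrow> foldr (\<circ>) ts id permutes {1..n} \<and> permutation (foldr (\<circ>) ts id)
   \<and> evenperm (foldr (\<circ>) ts id) = even (length ts)"
proof (induction ts)
  case Nil
  then show ?case by (auto simp: permutes_def)
next
  case (Cons t ts)
  have t: "t \<in> Tr n" and s: "set ts \<subseteq> Tr n" using Cons.prems by auto
  have IH: "foldr (\<circ>) ts id permutes {1..n} \<and> permutation (foldr (\<circ>) ts id)
   \<and> evenperm (foldr (\<circ>) ts id) = even (length ts)" by (rule Cons.IH[OF s])
  define P where "P = foldr (\<circ>) ts id"
  have e: "foldr (\<circ>) (t # ts) id = t \<circ> P" unfolding P_def by simp
  have IH': "P permutes {1..n}" "permutation P" "evenperm P = even (length ts)" using IH unfolding P_def by blast+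
  have "t \<circ> P permutes {1..n}" using permutes_compose[OF IH'(1) Tr_perm[OF t]] .
  moreover have "permutation (t \<circ> P)" using permutation_compose[OF Tr_permutation[OF t] IH'(2)] .
  moreover have "evenperm (t \<circ> P) = even (length (t # ts))"
    using evenperm_comp[OF Tr_permutation[OF t] IH'(2)] Tr_odd[OF t] IH'(3) by simp
  ultimately show ?case unfolding e by blast
qed

lemma isprod_perm: "isprod n r w \<Longrightarrow> w permutes {1..n} \<and> evenperm w = even r"
  unfolding isprod_def using prod_props by blast

lemma perm_isprod: assumes "w permutes {1..n}" shows "\<exists>r. isprod n r w"
  using assms finite_atLeastAtMost
proof (induction rule: permutes_induct)
  case id
  then show ?case unfolding isprod_def by (intro exI[of _ 0] exI[of _ "[]"]) auto
next
  case (swap a b p)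
  then obtain r where "isprod n r p" by blast
  moreover have "transpose a b \<in> Tr n" using swap unfolding Tr_def by blast
  ultimately show ?case using isprod_cons by blast
qed

lemma L_step: assumes "w permutes {1..n}" "\<tau> \<in> Tr n"
  shows "L n (\<tau> \<circ> w) = Suc (L n w) \<or> L n w = Suc (L n (\<tau> \<circ> w))"
proof -
  obtain r where "isprod n r w" using perm_isprod assms(1) by blast
  then have p1: "isprod n (L n w) w" by (rule L_prod)
  then have p2: "isprod n (Suc (L n w)) (\<tau> \<circ> w)" using isprod_cons assms(2) by blast
  then have p3: "isprod n (L n (\<tau> \<circ> w)) (\<tau> \<circ> w)" by (rule L_prod)
  have inv: "\<tau> \<circ> (\<tau> \<circ> w) = w" using assms(2) unfolding Tr_def by (auto simp: comp_assoc[symmetric])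
  have p4: "isprod n (Suc (L n (\<tau> \<circ> w))) w" using isprod_cons[OF p3 assms(2)] inv by simp
  have a: "L n (\<tau> \<circ> w) \<le> Suc (L n w)" using L_le[OF p2] .
  have b: "L n w \<le> Suc (L n (\<tau> \<circ> w))" using L_le[OF p4] .
  have c: "even (L n w) = even (Suc (L n (\<tau> \<circ> w)))"
    using isprod_perm[OF p1] isprod_perm[OF p4] by simp
  have gen: "\<And>x y::nat. x \<le> Suc y \<Longrightarrow> y \<le> Suc x \<Longrightarrow> even y = even (Suc x) \<Longrightarrow> x = Suc y \<or> y = Suc x"
    by presburger
  from gen[OF a b c] show ?thesis .
qed

lemma Tr_cases: assumes "t \<in> Tr (Suc n)"
  shows "(t \<in> Tr n \<and> t (Suc n) = Suc n) \<or> (\<exists>a\<in>{1..n}. t = transpose a (Suc n))"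
proof -
  obtain a b where t: "t = transpose a b" "a \<in> {1..Suc n}" "b \<in> {1..Suc n}" "a \<noteq> b"
    using assms unfolding Tr_def by blast
  show ?thesis
  proof (cases "a = Suc n \<or> b = Suc n")
    case True
    then show ?thesis using t by (auto simp: transpose_commute)
  next
    case False
    then have "t \<in> Tr n" using t unfolding Tr_def by (intro CollectI exI[of _ a] exI[of _ b]) auto
    then show ?thesis using False t by auto
  qed
qed

lemma strip: "set ts \<subseteq> Tr (Suc n) \<Longrightarrow> \<exists>ts'. set ts' \<subseteq> Tr n \<and>
  transpose (foldr (\<circ>) ts id (Suc n)) (Suc n) \<circ> foldr (\<circ>) ts id = foldr (\<circ>) ts' id \<and>
  length ts' + (if foldr (\<circ>) ts id (Suc n) = Suc n then 0 else 1) \<le> length ts"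
proof (induction ts)
  case Nil
  then show ?case by (intro exI[of _ "[]"]) auto
next
  case (Cons t ts)
  have t: "t \<in> Tr (Suc n)" and s: "set ts \<subseteq> Tr (Suc n)" using Cons.prems by auto
  define u where "u = foldr (\<circ>) ts id"
  define c where "c = u (Suc n)"
  obtain ts0 where ts0: "set ts0 \<subseteq> Tr n" "transpose c (Suc n) \<circ> u = foldr (\<circ>) ts0 id"
     "length ts0 + (if c = Suc n then 0 else 1) \<le> length ts"
    using Cons.IH[OF s] unfolding u_def c_def by blast
  define p where "p = foldr (\<circ>) ts0 id"
  have up: "\<And>x. u x = transpose c (Suc n) (p x)" using ts0(2) unfolding p_def
    by (metis comp_apply transpose_involutory)
  have uperm: "u permutes {1..Suc n}" using prod_props[OF s] unfolding u_def by blast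
  have c1: "c \<in> {1..Suc n}" unfolding c_def using permutes_in_image[OF uperm] by simp
  have pN: "p (Suc n) = Suc n" using up[of "Suc n"] unfolding c_def
    by (metis transpose_apply_first transpose_involutory)
  have e: "foldr (\<circ>) (t # ts) id = t \<circ> u" unfolding u_def by simp
  from Tr_cases[OF t] show ?case
  proof
    assume A: "t \<in> Tr n \<and> t (Suc n) = Suc n"
    then obtain a b where ab: "t = transpose a b" "a \<noteq> Suc n" "b \<noteq> Suc n" "a \<in> {1..n}" "b \<in> {1..n}"
      unfolding Tr_def by auto
    have eq: "transpose (t c) (Suc n) \<circ> (t \<circ> u) = t \<circ> p"
      using ab by (auto simp: fun_eq_iff up transpose_def)
    have tc: "(t c = Suc n) = (c = Suc n)" using ab by (auto simp: transpose_def)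
    have f: "foldr (\<circ>) (t # ts0) id = t \<circ> p" unfolding p_def by simp
    have s2: "set (t # ts0) \<subseteq> Tr n" using ts0(1) A by simp
    have l2: "length (t # ts0) + (if (t \<circ> u) (Suc n) = Suc n then 0 else 1) \<le> length (t # ts)"
      using ts0(3) tc by (simp add: c_def)
    have "transpose ((t \<circ> u) (Suc n)) (Suc n) \<circ> (t \<circ> u) = foldr (\<circ>) (t # ts0) id"
      using eq f by (simp add: c_def)
    then show ?thesis using s2 l2 unfolding e by blast
  next
    assume "\<exists>a\<in>{1..n}. t = transpose a (Suc n)"
    then obtain a where a: "a \<in> {1..n}" "t = transpose a (Suc n)" by blast
    consider "c = Suc n" | "c = a" | "c \<noteq> Suc n" "c \<noteq> a" by blast
    then show ?thesis
    proof cases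
      case 1
      have eq: "transpose ((t \<circ> u) (Suc n)) (Suc n) \<circ> (t \<circ> u) = p"
      proof -
        have "u = p" using up 1 by (simp add: fun_eq_iff)
        then show ?thesis using a pN by (simp add: fun_eq_iff)
      qed
      have ne: "(t \<circ> u) (Suc n) \<noteq> Suc n" using a 1 by (simp add: c_def[symmetric])
      have l2: "length ts0 + (if (t \<circ> u) (Suc n) = Suc n then 0 else 1) \<le> length (t # ts)"
        using ts0(3) ne 1 by simp
      show ?thesis using l2 eq ts0(1) unfolding e p_def by blast
    next
      case 2
      have eq: "transpose ((t \<circ> u) (Suc n)) (Suc n) \<circ> (t \<circ> u) = p"
        using a 2 pN by (auto simp: fun_eq_iff up transpose_def)
      have l2: "length ts0 + (if (t \<circ> u) (Suc n) = Suc n then 0 else 1) \<le> length (t # ts)"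
        using ts0(3) 2 a by simp
      show ?thesis using l2 eq ts0(1) unfolding e p_def by blast
    next
      case 3
      have wN: "(t \<circ> u) (Suc n) = c" using a 3 by (simp add: c_def[symmetric])
      have eq: "transpose c (Suc n) \<circ> (t \<circ> u) = transpose a c \<circ> p"
        using a 3 by (auto simp: fun_eq_iff up transpose_def)
      have inT: "transpose a c \<in> Tr n" using a 3 c1 unfolding Tr_def by (intro CollectI exI[of _ a] exI[of _ c]) auto
      have f: "foldr (\<circ>) (transpose a c # ts0) id = transpose a c \<circ> p" unfolding p_def by simp
      have s2: "set (transpose a c # ts0) \<subseteq> Tr n" using ts0(1) inT by simp
      have l2: "length (transpose a c # ts0) + (if (t \<circ> u) (Suc n) = Suc n then 0 else 1) \<le> length (t # ts)"
        using ts0(3) wN 3 by simp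
      have "transpose ((t \<circ> u) (Suc n)) (Suc n) \<circ> (t \<circ> u) = foldr (\<circ>) (transpose a c # ts0) id"
        using eq f wN by simp
      then show ?thesis using s2 l2 unfolding e by blast
    qed
  qed
qed

lemma phi_perm: assumes "w permutes {1..Suc n}"
  shows "transpose (w (Suc n)) (Suc n) \<circ> w permutes {1..n}"
proof -
  have "{1..Suc n} = insert (Suc n) {1..n}" by auto
  then show ?thesis using permutes_insert_lemma[of w "Suc n" "{1..n}"] assms
    by (simp add: transpose_commute)
qed

lemma L_strip: assumes "w permutes {1..Suc n}"
  shows "L (Suc n) w = L n (transpose (w (Suc n)) (Suc n) \<circ> w) + (if w (Suc n) = Suc n then 0 else 1)"
proof -
  define b where "b = w (Suc n)"
  define v where "v = transpose b (Suc n) \<circ> w"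
  have wv: "w = transpose b (Suc n) \<circ> v" unfolding v_def by (simp add: comp_assoc[symmetric])
  have vp: "v permutes {1..n}" using phi_perm[OF assms] unfolding v_def b_def .
  have b1: "b \<in> {1..Suc n}" unfolding b_def using permutes_in_image[OF assms] by simp
  obtain r where "isprod (Suc n) r w" using perm_isprod[OF assms] by blast
  then have "isprod (Suc n) (L (Suc n) w) w" by (rule L_prod)
  then obtain ts where ts: "length ts = L (Suc n) w" "set ts \<subseteq> Tr (Suc n)" "w = foldr (\<circ>) ts id"
    unfolding isprod_def by blast
  obtain ts' where ts': "set ts' \<subseteq> Tr n" "v = foldr (\<circ>) ts' id"
    "length ts' + (if b = Suc n then 0 else 1) \<le> length ts"
    using strip[OF ts(2)] unfolding ts(3)[symmetric] v_def b_def by blast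
  have "isprod n (length ts') v" using ts' unfolding isprod_def by blast
  then have ge: "L n v + (if b = Suc n then 0 else 1) \<le> L (Suc n) w" using L_le ts' ts(1) by fastforce
  obtain r2 where "isprod n r2 v" using perm_isprod[OF vp] by blast
  then have "isprod (Suc n) (L n v) v" using L_prod isprod_mono by blast
  then have "isprod (Suc n) (L n v + (if b = Suc n then 0 else 1)) w"
  proof (cases "b = Suc n")
    case True
    then show ?thesis using \<open>isprod (Suc n) (L n v) v\<close> wv by simp
  next
    case False
    have "transpose b (Suc n) \<in> Tr (Suc n)" using b1 False unfolding Tr_def by (intro CollectI exI[of _ b] exI[of _ "Suc n"]) auto
    then show ?thesis using isprod_cons[OF \<open>isprod (Suc n) (L n v) v\<close>] wv False by simp
  qed
  then have le: "L (Suc n) w \<le> L n v + (if b = Suc n then 0 else 1)" by (rule L_le)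
  show ?thesis using ge le unfolding v_def b_def by linarith
qed

definition F :: "nat \<Rightarrow> nat \<Rightarrow> nat" where
  "F n m = card {w. w permutes {1..n} \<and> L n w = m}"

lemma F_rec: "F (Suc n) m = F n m + n * card {w. w permutes {1..n} \<and> L n w + 1 = m}"
proof -
  define B where "B = (\<lambda>b. {w. w permutes {1..n} \<and> L n w + (if b = Suc n then 0 else 1) = m})"
  define S where "S = {w. w permutes {1..Suc n} \<and> L (Suc n) w = m}"
  have bij: "bij_betw (\<lambda>w. (w (Suc n), transpose (w (Suc n)) (Suc n) \<circ> w)) S (SIGMA b:{1..Suc n}. B b)"
  proof (rule bij_betw_byWitness[where f' = "\<lambda>(b, v). transpose b (Suc n) \<circ> v"])
    show "\<forall>a\<in>S. (\<lambda>(b, v). transpose b (Suc n) \<circ> v) (a (Suc n), transpose (a (Suc n)) (Suc n) \<circ> a) = a"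
      by (simp add: comp_assoc[symmetric])
    show "\<forall>a'\<in>SIGMA b:{1..Suc n}. B b. (\<lambda>w. (w (Suc n), transpose (w (Suc n)) (Suc n) \<circ> w))
          ((\<lambda>(b, v). transpose b (Suc n) \<circ> v) a') = a'"
    proof
      fix a' assume "a' \<in> (SIGMA b:{1..Suc n}. B b)"
      then obtain b v where a': "a' = (b, v)" "b \<in> {1..Suc n}" "v permutes {1..n}" unfolding B_def by blast
      have "v (Suc n) = Suc n" using permutes_not_in[OF a'(3)] by simp
      then show "(\<lambda>w. (w (Suc n), transpose (w (Suc n)) (Suc n) \<circ> w))
          ((\<lambda>(b, v). transpose b (Suc n) \<circ> v) a') = a'"
        using a' by (simp add: comp_assoc[symmetric])
    qed
    show "(\<lambda>w. (w (Suc n), transpose (w (Suc n)) (Suc n) \<circ> w)) ` S \<subseteq> (SIGMA b:{1..Suc n}. B b)"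
    proof
      fix x assume "x \<in> (\<lambda>w. (w (Suc n), transpose (w (Suc n)) (Suc n) \<circ> w)) ` S"
      then obtain w where w: "x = (w (Suc n), transpose (w (Suc n)) (Suc n) \<circ> w)" "w permutes {1..Suc n}"
        "L (Suc n) w = m" unfolding S_def by blast
      show "x \<in> (SIGMA b:{1..Suc n}. B b)"
        using w phi_perm[OF w(2)] L_strip[OF w(2)] permutes_in_image[OF w(2), of "Suc n"]
        unfolding B_def by auto
    qed
    show "(\<lambda>(b, v). transpose b (Suc n) \<circ> v) ` (SIGMA b:{1..Suc n}. B b) \<subseteq> S"
    proof
      fix x assume "x \<in> (\<lambda>(b, v). transpose b (Suc n) \<circ> v) ` (SIGMA b:{1..Suc n}. B b)"
      then obtain b v where bv: "x = transpose b (Suc n) \<circ> v" "b \<in> {1..Suc n}" "v permutes {1..n}"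
        "L n v + (if b = Suc n then 0 else 1) = m" unfolding B_def by auto
      have vN: "v (Suc n) = Suc n" using permutes_not_in[OF bv(3)] by simp
      have xp: "x permutes {1..Suc n}" unfolding bv(1)
        by (rule permutes_compose[OF permutes_subset[OF bv(3)] permutes_swap_id]) (use bv(2) in auto)
      have xN: "x (Suc n) = b" using vN bv(1) by simp
      have "transpose (x (Suc n)) (Suc n) \<circ> x = v" using xN bv(1) by (simp add: comp_assoc[symmetric])
      then have "L (Suc n) x = m" using L_strip[OF xp] xN bv(4) by simp
      then show "x \<in> S" unfolding S_def using xp by blast
    qed
  qed
  have fin: "\<And>b. finite (B b)" unfolding B_def
    by (rule finite_subset[OF _ finite_permutations[of "{1..n}"]]) auto
  have "F (Suc n) m = card (SIGMA b:{1..Suc n}. B b)" unfolding F_def S_def[symmetric]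
    using bij_betw_same_card[OF bij] .
  also have "\<dots> = (\<Sum>b\<in>{1..Suc n}. card (B b))" using fin by simp
  also have "\<dots> = card (B (Suc n)) + (\<Sum>b\<in>{1..n}. card (B b))"
    by (simp add: atLeastAtMostSuc_conv)
  also have "(\<Sum>b\<in>{1..n}. card (B b)) = (\<Sum>b\<in>{1..n}. card {w. w permutes {1..n} \<and> L n w + 1 = m})"
    by (rule sum.cong) (auto simp: B_def)
  also have "\<dots> = n * card {w. w permutes {1..n} \<and> L n w + 1 = m}" by simp
  also have "card (B (Suc n)) = F n m" unfolding B_def F_def by simp
  finally show ?thesis .
qed

lemma L_id: "L n id = 0"
proof -
  have "isprod n 0 id" unfolding isprod_def by auto
  then show ?thesis using L_le by fastforce
qed

lemma F_formula: "F n m = (if m \<le> n then stirling n (n - m) else 0)"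
proof (induction n arbitrary: m)
  case 0
  have "{w. w permutes {1..0::nat} \<and> L 0 w = m} = (if m = 0 then {id} else {})"
    using L_id by auto
  then show ?case unfolding F_def by simp
next
  case (Suc n)
  have G: "card {w. w permutes {1..n} \<and> L n w + 1 = m} = (if m = 0 then 0 else F n (m - 1))"
  proof (cases "m = 0")
    case True then show ?thesis by simp
  next
    case False
    then have "{w. w permutes {1..n} \<and> L n w + 1 = m} = {w. w permutes {1..n} \<and> L n w = m - 1}" by auto
    then show ?thesis using False unfolding F_def by simp
  qed
  have r: "F (Suc n) m = F n m + n * (if m = 0 then 0 else F n (m - 1))" using F_rec G by simp
  show ?case
  proof (cases m)
    case 0
    then show ?thesis using r Suc.IH by simp
  next
    case (Suc j)
    show ?thesis
    proof (cases "j < n")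
      case True
      then have "n - j = Suc (n - Suc j)" by simp
      then show ?thesis using r Suc.IH \<open>m = Suc j\<close> True by simp
    next
      case False
      show ?thesis
      proof (cases "j = n")
        case True
        then show ?thesis using r Suc.IH \<open>m = Suc j\<close> by (cases n) auto
      next
        case False
        then show ?thesis using r Suc.IH \<open>m = Suc j\<close> \<open>\<not> j < n\<close> by simp
      qed
    qed
  qed
qed

abbreviation s12 :: "nat \<Rightarrow> nat" where "s12 \<equiv> transpose 1 2"

lemma s_Tr: "2 \<le> n \<Longrightarrow> s12 \<in> Tr n"
  unfolding Tr_def by (intro CollectI exI[of _ 1] exI[of _ 2]) auto

lemma ss: "transpose a b \<circ> (transpose a b \<circ> f) = f"
  by (simp add: comp_assoc[symmetric])

lemma conj_Tr: assumes "2 \<le> n" "\<tau> \<in> Tr n" shows "s12 \<circ> \<tau> \<circ> s12 \<in> Tr n"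
proof -
  obtain a b where t: "\<tau> = transpose a b" "a \<in> {1..n}" "b \<in> {1..n}" "a \<noteq> b"
    using assms(2) unfolding Tr_def by blast
  have "s12 a \<in> {1..n}" "s12 b \<in> {1..n}" using t assms(1) by (auto simp: transpose_def)
  moreover have "s12 a \<noteq> s12 b" using t(4) by (simp add: transpose_def split: if_splits)
  ultimately show ?thesis unfolding t(1) conj_transpose Tr_def
    by (intro CollectI exI[of _ "s12 a"] exI[of _ "s12 b"]) auto
qed

lemma sTr_gens: assumes "\<tau> \<in> Tr n" shows "s12 \<circ> \<tau> \<in> gens_T n"
proof -
  obtain a b where t: "\<tau> = transpose a b" "a \<in> {1..n}" "b \<in> {1..n}" "a \<noteq> b"
    using assms unfolding Tr_def by blast
  show ?thesis
  proof (cases "a < b")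
    case True
    then show ?thesis unfolding gens_T_def t(1) using t
      by (intro CollectI exI[of _ a] exI[of _ b]) auto
  next
    case False
    then show ?thesis unfolding gens_T_def t(1) using t
      by (intro CollectI exI[of _ b] exI[of _ a]) (auto simp: transpose_commute)
  qed
qed

lemma gens_Tr: assumes "g \<in> gens_T n" shows "\<exists>\<tau>\<in>Tr n. g = s12 \<circ> \<tau>"
proof -
  obtain i j where g: "g = s12 \<circ> transpose i j" "1 \<le> i" "i < j" "j \<le> n"
    using assms unfolding gens_T_def by blast
  have "transpose i j \<in> Tr n" using g unfolding Tr_def
    by (intro CollectI exI[of _ i] exI[of _ j]) auto
  then show ?thesis using g by blast
qed

lemma G1: assumes "2 \<le> n" shows "set ts \<subseteq> Tr n \<Longrightarrow> \<exists>gs. length gs = length ts \<and> set gs \<subseteq> gens_T n \<and>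
   foldr (\<circ>) gs id = (if even (length ts) then foldr (\<circ>) ts id else s12 \<circ> foldr (\<circ>) ts id)"
proof (induction ts)
  case Nil
  then show ?case by auto
next
  case (Cons t ts)
  have t: "t \<in> Tr n" and s: "set ts \<subseteq> Tr n" using Cons.prems by auto
  obtain gs where gs: "length gs = length ts" "set gs \<subseteq> gens_T n"
    "foldr (\<circ>) gs id = (if even (length ts) then foldr (\<circ>) ts id else s12 \<circ> foldr (\<circ>) ts id)"
    using Cons.IH[OF s] by blast
  define P where "P = foldr (\<circ>) ts id"
  show ?case
  proof (cases "even (length ts)")
    case True
    have g: "s12 \<circ> t \<in> gens_T n" using sTr_gens[OF t] .
    have "foldr (\<circ>) ((s12 \<circ> t) # gs) id = s12 \<circ> (t \<circ> P)"
      using gs(3) True unfolding P_def by (simp add: comp_assoc)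
    also have "\<dots> = (if even (length (t # ts)) then foldr (\<circ>) (t # ts) id else s12 \<circ> foldr (\<circ>) (t # ts) id)"
      using True unfolding P_def by simp
    finally have C: "foldr (\<circ>) ((s12 \<circ> t) # gs) id = (if even (length (t # ts)) then foldr (\<circ>) (t # ts) id else s12 \<circ> foldr (\<circ>) (t # ts) id)" .
    have A: "length ((s12 \<circ> t) # gs) = length (t # ts)" using gs(1) by simp
    have B: "set ((s12 \<circ> t) # gs) \<subseteq> gens_T n" using gs(2) g by simp
    show ?thesis using A B C by blast
  next
    case False
    have g: "s12 \<circ> (s12 \<circ> t \<circ> s12) \<in> gens_T n" using sTr_gens[OF conj_Tr[OF assms t]] .
    have "foldr (\<circ>) ((s12 \<circ> (s12 \<circ> t \<circ> s12)) # gs) id = t \<circ> P"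
      using gs(3) False unfolding P_def by (simp add: comp_assoc ss)
    also have "\<dots> = (if even (length (t # ts)) then foldr (\<circ>) (t # ts) id else s12 \<circ> foldr (\<circ>) (t # ts) id)"
      using False unfolding P_def by simp
    finally have C: "foldr (\<circ>) ((s12 \<circ> (s12 \<circ> t \<circ> s12)) # gs) id = (if even (length (t # ts)) then foldr (\<circ>) (t # ts) id else s12 \<circ> foldr (\<circ>) (t # ts) id)" .
    have A: "length ((s12 \<circ> (s12 \<circ> t \<circ> s12)) # gs) = length (t # ts)" using gs(1) by simp
    have B: "set ((s12 \<circ> (s12 \<circ> t \<circ> s12)) # gs) \<subseteq> gens_T n" using gs(2) g by simp
    show ?thesis using A B C by blast
  qed
qed

lemma G2: assumes "2 \<le> n" shows "set gs \<subseteq> gens_T n \<Longrightarrow>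
   isprod n (length gs) (if even (length gs) then foldr (\<circ>) gs id else s12 \<circ> foldr (\<circ>) gs id)"
proof (induction gs)
  case Nil
  then show ?case unfolding isprod_def by auto
next
  case (Cons g gs)
  have g: "g \<in> gens_T n" and s: "set gs \<subseteq> gens_T n" using Cons.prems by auto
  obtain t where t: "t \<in> Tr n" "g = s12 \<circ> t" using gens_Tr[OF g] by blast
  define P where "P = foldr (\<circ>) gs id"
  have IH: "isprod n (length gs) (if even (length gs) then P else s12 \<circ> P)"
    using Cons.IH[OF s] unfolding P_def .
  have e: "foldr (\<circ>) (g # gs) id = s12 \<circ> (t \<circ> P)" unfolding P_def t(2) by (simp add: comp_assoc)
  show ?case
  proof (cases "even (length gs)")
    case True
    then have "isprod n (Suc (length gs)) (t \<circ> P)" using isprod_cons[OF _ t(1)] IH by simp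
    moreover have "(if even (length (g # gs)) then s12 \<circ> (t \<circ> P) else s12 \<circ> (s12 \<circ> (t \<circ> P))) = t \<circ> P"
      using True by (simp only: ss length_Cons even_Suc if_False not_True_eq_False)
    ultimately show ?thesis using True unfolding e by (simp only: length_Cons)
  next
    case False
    then have "isprod n (Suc (length gs)) ((s12 \<circ> t \<circ> s12) \<circ> (s12 \<circ> P))"
      using isprod_cons[OF _ conj_Tr[OF assms t(1)]] IH by simp
    moreover have "(s12 \<circ> t \<circ> s12) \<circ> (s12 \<circ> P) = s12 \<circ> (t \<circ> P)" by (simp add: comp_assoc ss)
    moreover have "(if even (length (g # gs)) then s12 \<circ> (t \<circ> P) else s12 \<circ> (s12 \<circ> (t \<circ> P))) = s12 \<circ> (t \<circ> P)"
      using False by (simp only: length_Cons even_Suc if_True not_False_eq_True)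
    ultimately show ?thesis unfolding e by (simp only: length_Cons)
  qed
qed

lemma L_self: "w permutes {1..n} \<Longrightarrow> isprod n (L n w) w"
  using perm_isprod L_prod by blast

lemma lenT_eq: assumes n: "2 \<le> n" and vp: "v permutes {1..n}" and ev: "evenperm v"
  shows "lenT n v = min (L n v) (L n (s12 \<circ> v))"
  unfolding lenT_def
proof (rule Least_equality)
  have p1: "isprod n (L n v) v" using L_self[OF vp] .
  have e1: "even (L n v)" using isprod_perm[OF p1] ev by simp
  have p2: "isprod n (Suc (L n v)) (s12 \<circ> v)" using isprod_cons[OF p1 s_Tr[OF n]] .
  have sp: "s12 \<circ> v permutes {1..n}" using isprod_perm[OF p2] by blast
  have p3: "isprod n (L n (s12 \<circ> v)) (s12 \<circ> v)" using L_self[OF sp] .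
  have e3: "odd (L n (s12 \<circ> v))" using isprod_perm[OF p3] isprod_perm[OF p2] e1 by simp
  show "\<exists>ts. length ts = min (L n v) (L n (s12 \<circ> v)) \<and> set ts \<subseteq> gens_T n \<and> v = foldr (\<circ>) ts id"
  proof (cases "L n v \<le> L n (s12 \<circ> v)")
    case True
    obtain ts where ts: "length ts = L n v" "set ts \<subseteq> Tr n" "v = foldr (\<circ>) ts id"
      using p1 unfolding isprod_def by blast
    obtain gs where gs: "length gs = length ts" "set gs \<subseteq> gens_T n"
      "foldr (\<circ>) gs id = (if even (length ts) then foldr (\<circ>) ts id else s12 \<circ> foldr (\<circ>) ts id)"
      using G1[OF n ts(2)] by blast
    have "foldr (\<circ>) gs id = v" using gs(3) ts e1 by simp
    then show ?thesis using gs ts True by (intro exI[of _ gs]) simp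
  next
    case False
    obtain ts where ts: "length ts = L n (s12 \<circ> v)" "set ts \<subseteq> Tr n" "s12 \<circ> v = foldr (\<circ>) ts id"
      using p3 unfolding isprod_def by blast
    obtain gs where gs: "length gs = length ts" "set gs \<subseteq> gens_T n"
      "foldr (\<circ>) gs id = (if even (length ts) then foldr (\<circ>) ts id else s12 \<circ> foldr (\<circ>) ts id)"
      using G1[OF n ts(2)] by blast
    have "foldr (\<circ>) gs id = s12 \<circ> (s12 \<circ> v)" using gs(3) ts e3 by simp
    then have "foldr (\<circ>) gs id = v" by (simp only: ss)
    then show ?thesis using gs ts False by (intro exI[of _ gs]) simp
  qed
  show "\<And>y. \<exists>ts. length ts = y \<and> set ts \<subseteq> gens_T n \<and> v = foldr (\<circ>) ts id \<Longrightarrow>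
         min (L n v) (L n (s12 \<circ> v)) \<le> y"
  proof -
    fix y assume "\<exists>ts. length ts = y \<and> set ts \<subseteq> gens_T n \<and> v = foldr (\<circ>) ts id"
    then obtain gs where gs: "length gs = y" "set gs \<subseteq> gens_T n" "v = foldr (\<circ>) gs id" by blast
    have "isprod n y (if even y then v else s12 \<circ> v)" using G2[OF n gs(2)] unfolding gs(1) gs(3)[symmetric] .
    then show "min (L n v) (L n (s12 \<circ> v)) \<le> y"
      by (cases "even y") (auto dest: L_le)
  qed
qed

theorem claim7p1:
  fixes n k :: nat
  assumes "n \<ge> 2" and "odd k" and "1 \<le> k" and "k \<le> n"
  shows "stirling n (n - k) = a_count n k + a_count n (k - 1)"
proof -
  have n: "2 \<le> n" using assms by simp
  define A where "A = alt_group n"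
  have finA: "finite A" unfolding A_def alt_group_def
    by (rule finite_subset[OF _ finite_permutations[of "{1..n}"]]) auto
  have key: "\<And>v. v \<in> A \<Longrightarrow> (lenT n v = k \<or> lenT n v = k - 1) = (L n (s12 \<circ> v) = k)"
  proof -
    fix v assume "v \<in> A"
    then have vp: "v permutes {1..n}" and ev: "evenperm v" unfolding A_def alt_group_def by auto
    have p1: "isprod n (L n v) v" using L_self[OF vp] .
    have e1: "even (L n v)" using isprod_perm[OF p1] ev by simp
    have st: "L n (s12 \<circ> v) = Suc (L n v) \<or> L n v = Suc (L n (s12 \<circ> v))"
      using L_step[OF vp s_Tr[OF n]] .
    have le: "lenT n v = min (L n v) (L n (s12 \<circ> v))" using lenT_eq[OF n vp ev] .
    have gen: "\<And>x y. even x \<Longrightarrow> (y = Suc x \<or> x = Suc y) \<Longrightarrow>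
        (min x y = k \<or> min x y = k - 1) = (y = k)" using assms(2,3) by presburger
    show "(lenT n v = k \<or> lenT n v = k - 1) = (L n (s12 \<circ> v) = k)"
      unfolding le using gen[OF e1 st] .
  qed
  have un: "{v \<in> A. lenT n v = k} \<union> {v \<in> A. lenT n v = k - 1} = {v \<in> A. L n (s12 \<circ> v) = k}"
    using key by blast
  have dis: "{v \<in> A. lenT n v = k} \<inter> {v \<in> A. lenT n v = k - 1} = {}" using assms(3) by auto
  have "a_count n k + a_count n (k - 1) = card {v \<in> A. L n (s12 \<circ> v) = k}"
    unfolding a_count_def A_def[symmetric] un[symmetric]
    by (rule card_Un_disjoint[symmetric]) (use finA dis in auto)
  also have "\<dots> = card {w. w permutes {1..n} \<and> L n w = k}"
  proof (rule bij_betw_same_card[of "\<lambda>v. s12 \<circ> v"], rule bij_betw_byWitness[where f' = "\<lambda>v. s12 \<circ> v"])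
    show "\<forall>a\<in>{v \<in> A. L n (s12 \<circ> v) = k}. s12 \<circ> (s12 \<circ> a) = a" by (simp only: ss) simp
    show "\<forall>a\<in>{w. w permutes {1..n} \<and> L n w = k}. s12 \<circ> (s12 \<circ> a) = a" by (simp only: ss) simp
    have sperm: "s12 permutes {1..n}" using Tr_perm[OF s_Tr[OF n]] .
    show "(\<circ>) s12 ` {v \<in> A. L n (s12 \<circ> v) = k} \<subseteq> {w. w permutes {1..n} \<and> L n w = k}"
      unfolding A_def alt_group_def using permutes_compose[OF _ sperm] by auto
    show "(\<circ>) s12 ` {w. w permutes {1..n} \<and> L n w = k} \<subseteq> {v \<in> A. L n (s12 \<circ> v) = k}"
    proof
      fix x assume "x \<in> (\<circ>) s12 ` {w. w permutes {1..n} \<and> L n w = k}"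
      then obtain w where w: "x = s12 \<circ> w" "w permutes {1..n}" "L n w = k" by blast
      have p1: "isprod n k w" using L_self[OF w(2)] w(3) by simp
      have "isprod n (Suc k) x" using isprod_cons[OF p1 s_Tr[OF n]] w(1) by simp
      then have "x permutes {1..n}" "evenperm x" using isprod_perm assms(2) by auto
      moreover have "L n (s12 \<circ> x) = k" using w by (simp only: ss)
      ultimately show "x \<in> {v \<in> A. L n (s12 \<circ> v) = k}" unfolding A_def alt_group_def by blast
    qed
  qed
  also have "\<dots> = stirling n (n - k)" using F_formula[of n k] assms(4) unfolding F_def by simp
  finally show ?thesis by simp
qed

end
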